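(* Let $B>0$ and let $d\ge1$ be an integer. Let $(X_s,Y_s)_{s\ge1}$ be any sequence with $\|X_s\|_2\le1$ and $Y_s\in\mathbb R$; set $\ell_s(\theta)=\tfrac12(\langle\theta,X_s\rangle-Y_s)^2$ and $\mathcal L_s(Q)=-\log\int e^{-\ell_s(\theta)}\,\mathrm dQ(\theta)$. For each $j\in\{1,\dots,d\}$ run an independent exponentially weighted average (EWA) forecaster with prior the uniform distribution $U$ on $\mathcal B(B+1)$ only on the rounds $I_j=\{j,j+d,j+2d,\dots\}$: at round $s\in I_j$ it plays $\mathrm dQ_s(\theta)\propto\exp(-\sum_{r\in I_j,\,r<s}\ell_r(\theta))\,\mathrm dU(\theta)$. The joint forecaster plays at each round $s$ the distribution $Q_s$ of the forecaster $j$ with $s\in I_j$. Then for all $\bar\theta\in\mathcal B(B)$ and all $t\ge1$, $$\sum_{s=1}^t\mathcal L_s(Q_s)-\sum_{s=1}^t\ell_s(\bar\theta)\le\frac{dp}{2}\log\frac{(B+1)^2e\max(dp,t+d)}{dp}.$$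
   Context: $\langle\cdot,\cdot\rangle$ is the Euclidean inner product on $\mathbb R^p$ and $\mathcal B(r)$ the closed centred Euclidean ball of radius $r$ in $\mathbb R^p$. *)

theory Defs
  imports "HOL-Analysis.Analysis"
begin

definition sq_loss :: "(nat \<Rightarrow> 'a::euclidean_space) \<Rightarrow> (nat \<Rightarrow> real) \<Rightarrow> nat \<Rightarrow> 'a \<Rightarrow> real" where
  "sq_loss X Y s \<theta> = (\<theta> \<bullet> X s - Y s)\<^sup>2 / 2"

definition mix_loss :: "'a measure \<Rightarrow> ('a \<Rightarrow> real) \<Rightarrow> real" where
  "mix_loss Q f = - ln (\<integral>\<theta>. exp (- f \<theta>) \<partial>Q)"

definition unif_ball :: "real \<Rightarrow> 'a::euclidean_space measure" where
  "unif_ball R = uniform_measure lborel (cball 0 R)"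

definition ewa_post :: "'a measure \<Rightarrow> ('a \<Rightarrow> real) \<Rightarrow> 'a measure" where
  "ewa_post U F = density U (\<lambda>\<theta>. ennreal (exp (- F \<theta>) / (\<integral>\<eta>. exp (- F \<eta>) \<partial>U)))"

text \<open>Rounds of the sub-forecaster handling round s that precede s:
  rounds r \<ge> 1, r < s, in the same class I_j = {j, j+d, j+2d, ...}.\<close>
definition past_rounds :: "nat \<Rightarrow> nat \<Rightarrow> nat set" where
  "past_rounds d s = {r. 1 \<le> r \<and> r < s \<and> r mod d = s mod d}"

definition joint_forecast :: "nat \<Rightarrow> real \<Rightarrow> (nat \<Rightarrow> 'a::euclidean_space) \<Rightarrow> (nat \<Rightarrow> real) \<Rightarrow> nat \<Rightarrow> 'a measure" where
  "joint_forecast d B X Y s =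
     ewa_post (unif_ball (B + 1)) (\<lambda>\<theta>. \<Sum>r\<in>past_rounds d s. sq_loss X Y r \<theta>)"

end

theory Submission
  imports Defs
begin

lemma lborel_translate:
  fixes f :: "'a::euclidean_space \<Rightarrow> real"
  assumes [measurable]: "f \<in> borel_measurable borel"
  shows "(\<integral>x. f x \<partial>lborel) = (\<integral>x. f (c + x) \<partial>lborel)"
proof -
  have "(\<integral>x. f x \<partial>lborel) = (\<integral>x. f x \<partial>(distr lborel borel ((+) c)))"
    by (simp add: lborel_distr_plus)
  also have "\<dots> = (\<integral>x. f (c + x) \<partial>lborel)"
    by (subst integral_distr) auto
  finally show ?thesis .
qed

lemma lborel_reflect:
  fixes f :: "'a::euclidean_space \<Rightarrow> real"
  assumes [measurable]: "f \<in> borel_measurable borel"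
  shows "(\<integral>x. f x \<partial>lborel) = (\<integral>x. f (- x) \<partial>lborel)"
proof -
  have eq: "lborel = distr lborel borel (\<lambda>x::'a. - x)"
    using lborel_affine[of "-1::real" "0::'a"] by (simp add: density_1)
  have "(\<integral>x. f x \<partial>lborel) = (\<integral>x. f x \<partial>(distr lborel borel (\<lambda>x::'a. - x)))"
    by (subst eq[symmetric]) simp
  also have "\<dots> = (\<integral>x. f (- x) \<partial>lborel)"
    by (subst integral_distr) auto
  finally show ?thesis .
qed

lemma lin_ball_zero:
  fixes X :: "'a::euclidean_space"
  shows "(\<integral>u. indicator (cball 0 e) u * (u \<bullet> X) \<partial>lborel) = 0"
proof -
  have "(\<integral>u. indicator (cball 0 e) u * (u \<bullet> X) \<partial>lborel)
      = (\<integral>u. indicator (cball 0 e) (-u) * ((-u) \<bullet> X) \<partial>lborel)"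
    by (rule lborel_reflect)
       (intro borel_measurable_times borel_measurable_indicator borel_closed closed_cball
              borel_measurable_continuous_onI continuous_intros)
  also have "\<dots> = - (\<integral>u. indicator (cball 0 e) u * (u \<bullet> X) \<partial>lborel)"
    by (simp add: indicator_def)
  finally show ?thesis by simp
qed

lemma cball_vol:
  assumes "r \<ge> 0"
  shows "measure lborel (cball (c::'a::euclidean_space) r) = r ^ DIM('a) * measure lborel (cball (0::'a) 1)"
  using content_ball_conv_unit_ball[OF assms, of c] by (simp add: content_cball_conv_ball)

lemma unit_vol_pos: "measure lborel (cball (0::'a::euclidean_space) 1) > 0"
  using content_cball_pos[of 1 "0::'a"] by simp

lemma unif_int:
  fixes f :: "'a::euclidean_space \<Rightarrow> real"
  assumes "R > 0" and [measurable]: "f \<in> borel_measurable borel"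
  shows "(\<integral>x. f x \<partial>unif_ball R) =
     (\<integral>x. indicator (cball 0 R) x * f x \<partial>lborel) / measure lborel (cball (0::'a) R)"
proof -
  let ?S = "cball (0::'a) R"
  let ?m = "measure lborel ?S"
  have mpos: "?m > 0" using cball_vol[of R 0] unit_vol_pos[where 'a='a] assms by simp
  have em: "emeasure lborel ?S = ennreal ?m"
    using emeasure_lborel_cball_finite[of "0::'a" R] by (intro emeasure_eq_ennreal_measure) auto
  have d1: "1 / ennreal ?m = ennreal (1/?m)" using divide_ennreal[of 1 ?m] mpos by simp
  have "unif_ball R = density lborel (\<lambda>x. ennreal (indicator ?S x / ?m))"
    unfolding unif_ball_def uniform_measure_def em
    by (intro density_cong) (auto simp: indicator_def d1)
  then have "(\<integral>x. f x \<partial>unif_ball R) = (\<integral>x. (indicator ?S x / ?m) *\<^sub>R f x \<partial>lborel)"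
    using mpos by (simp only:) (rule integral_density; (intro borel_measurable_divide borel_measurable_indicator borel_closed closed_cball borel_measurable_const AE_I2)?; simp)
  also have "\<dots> = (\<integral>x. indicator ?S x * f x \<partial>lborel) / ?m"
    by simp
  finally show ?thesis .
qed


lemma int_cball:
  fixes f :: "'a::euclidean_space \<Rightarrow> real"
  assumes "continuous_on (cball c r) f"
  shows "integrable lborel (\<lambda>x. indicator (cball c r) x * f x)"
  using borel_integrable_compact[OF compact_cball assms] by simp

lemma meas_ind:
  fixes f :: "'a::euclidean_space \<Rightarrow> real"
  assumes "continuous_on UNIV f"
  shows "(\<lambda>x. indicator (cball c r) x * f x) \<in> borel_measurable borel"
  by (intro borel_measurable_times borel_measurable_indicator borel_closed closed_cball
            borel_measurable_continuous_onI assms)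

lemma sq_loss_cont: "continuous_on S (\<lambda>\<theta>. sq_loss X Y r \<theta>)"
  unfolding sq_loss_def by (intro continuous_intros) auto

lemma L_cont: "continuous_on S (\<lambda>\<theta>. \<Sum>r\<in>A. sq_loss X Y r \<theta>)"
  by (intro continuous_on_sum sq_loss_cont)

lemma per_r_bound:
  fixes Xr \<theta>b :: "'a::euclidean_space"
  assumes "norm Xr \<le> 1" "e \<ge> 0"
  shows "(\<integral>u. indicator (cball 0 e) u * (((\<theta>b + u) \<bullet> Xr - y)\<^sup>2 / 2) \<partial>lborel)
     \<le> measure lborel (cball (0::'a) e) * ((\<theta>b \<bullet> Xr - y)\<^sup>2 / 2 + e\<^sup>2 / 2)"
proof -
  let ?W = "cball (0::'a) e"
  define a where "a = \<theta>b \<bullet> Xr - y"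
  have pt: "indicator ?W u * (((\<theta>b + u) \<bullet> Xr - y)\<^sup>2 / 2)
      \<le> indicator ?W u * (a\<^sup>2 / 2 + e\<^sup>2 / 2) + a * (indicator ?W u * (u \<bullet> Xr))" for u
  proof (cases "u \<in> ?W")
    case True
    have "\<bar>u \<bullet> Xr\<bar> \<le> norm u * norm Xr" by (rule Cauchy_Schwarz_ineq2)
    also have "\<dots> \<le> e * 1" using True assms by (intro mult_mono) auto
    finally have "(u \<bullet> Xr)\<^sup>2 \<le> e\<^sup>2"
      by (metis abs_le_square_iff abs_of_nonneg assms(2) mult.right_neutral)
    moreover have "((\<theta>b + u) \<bullet> Xr - y)\<^sup>2 / 2 = a\<^sup>2/2 + a * (u \<bullet> Xr) + (u \<bullet> Xr)\<^sup>2/2"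
      by (simp add: a_def inner_add_left power2_eq_square field_simps)
    ultimately show ?thesis using True by simp
  qed simp
  have i1: "integrable lborel (\<lambda>u. indicator ?W u * (((\<theta>b + u) \<bullet> Xr - y)\<^sup>2 / 2))"
    by (intro int_cball continuous_intros) auto
  have i2: "integrable lborel (\<lambda>u. indicator ?W u * (a\<^sup>2 / 2 + e\<^sup>2 / 2))"
    by (intro int_cball continuous_intros) auto
  have i3: "integrable lborel (\<lambda>u. indicator ?W u * (u \<bullet> Xr))"
    by (intro int_cball continuous_intros)
  have "(\<integral>u. indicator ?W u * (((\<theta>b + u) \<bullet> Xr - y)\<^sup>2 / 2) \<partial>lborel)
      \<le> (\<integral>u. indicator ?W u * (a\<^sup>2 / 2 + e\<^sup>2 / 2) + a * (indicator ?W u * (u \<bullet> Xr)) \<partial>lborel)"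
    using i1 i2 i3 pt by (intro integral_mono) auto
  also have "\<dots> = (\<integral>u. indicator ?W u * (a\<^sup>2 / 2 + e\<^sup>2 / 2) \<partial>lborel) + a * (\<integral>u. indicator ?W u * (u \<bullet> Xr) \<partial>lborel)"
    using i2 i3 by simp
  also have "\<dots> = measure lborel ?W * (a\<^sup>2 / 2 + e\<^sup>2 / 2)"
    using emeasure_lborel_cball_finite[of "0::'a" e]
    by (simp add: lin_ball_zero)
  finally show ?thesis by (simp add: a_def)
qed


lemma lemK:
  fixes X :: "nat \<Rightarrow> 'a::euclidean_space" and \<theta>b :: 'a and e R :: real
  assumes finA: "finite A" and nX: "\<forall>r\<in>A. norm (X r) \<le> 1" and e: "0 < e" and R: "norm \<theta>b + e \<le> R"
  shows "(e/R)^DIM('a) * exp (- ((\<Sum>r\<in>A. sq_loss X Y r \<theta>b) + card A * e\<^sup>2/2))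
     \<le> (\<integral>\<theta>. exp (- (\<Sum>r\<in>A. sq_loss X Y r \<theta>)) \<partial>unif_ball R)"
proof -
  have Rpos: "R > 0" using e R norm_ge_zero[of \<theta>b] by linarith
  define g where "g = (\<lambda>\<theta>. \<Sum>r\<in>A. sq_loss X Y r \<theta>)"
  define K where "K = (\<Sum>r\<in>A. sq_loss X Y r \<theta>b) + card A * e\<^sup>2/2"
  let ?S = "cball (0::'a) R"
  let ?C = "cball \<theta>b e"
  let ?W = "cball (0::'a) e"
  let ?mR = "measure lborel ?S"
  let ?mW = "measure lborel ?W"
  have gc: "continuous_on T g" for T unfolding g_def by (rule L_cont)
  have gc2: "continuous_on T (\<lambda>u. g (\<theta>b + u))" for T
    by (rule continuous_on_compose2[OF gc[of UNIV]]) (auto intro: continuous_intros)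
  have mR: "?mR = R ^ DIM('a) * measure lborel (cball (0::'a) 1)" using cball_vol[of R "0::'a"] Rpos by simp
  have mW: "?mW = e ^ DIM('a) * measure lborel (cball (0::'a) 1)" using cball_vol[of e "0::'a"] e by simp
  have u1: "measure lborel (cball (0::'a) 1) > 0" by (rule unit_vol_pos)
  have mRpos: "?mR > 0" using mR u1 Rpos by simp
  have CS: "?C \<subseteq> ?S"
  proof
    fix x assume "x \<in> ?C"
    then have "norm (x - \<theta>b) \<le> e" by (simp add: dist_norm norm_minus_commute)
    then have "norm x \<le> norm \<theta>b + e" using norm_triangle_sub[of x \<theta>b] by linarith
    then show "x \<in> ?S" using R by simp
  qed
  have Z: "(\<integral>\<theta>. exp (- g \<theta>) \<partial>unif_ball R) = (\<integral>x. indicator ?S x * exp (- g x) \<partial>lborel) / ?mR"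
    by (rule unif_int[OF Rpos]) (intro borel_measurable_continuous_onI continuous_intros gc)
  have I1: "(\<integral>x. indicator ?C x * exp (- g x) \<partial>lborel) \<le> (\<integral>x. indicator ?S x * exp (- g x) \<partial>lborel)"
  proof (rule integral_mono)
    show "integrable lborel (\<lambda>x. indicator ?C x * exp (- g x))"
      by (intro int_cball continuous_intros gc)
    show "integrable lborel (\<lambda>x. indicator ?S x * exp (- g x))"
      by (intro int_cball continuous_intros gc)
    show "indicator ?C x * exp (- g x) \<le> indicator ?S x * exp (- g x)" for x
      using CS by (auto simp: indicator_def)
  qed
  have I2: "(\<integral>x. indicator ?C x * exp (- g x) \<partial>lborel) = (\<integral>u. indicator ?W u * exp (- g (\<theta>b + u)) \<partial>lborel)"
  proof -
    have "(\<integral>x. indicator ?C x * exp (- g x) \<partial>lborel) = (\<integral>u. indicator ?C (\<theta>b + u) * exp (- g (\<theta>b + u)) \<partial>lborel)"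
      by (rule lborel_translate) (intro meas_ind continuous_intros gc)
    also have "\<dots> = (\<integral>u. indicator ?W u * exp (- g (\<theta>b + u)) \<partial>lborel)"
      by (intro Bochner_Integration.integral_cong refl) (simp add: indicator_def dist_norm)
    finally show ?thesis .
  qed
  have iW: "integrable lborel (\<lambda>u. indicator ?W u * g (\<theta>b + u))"
    by (intro int_cball gc2)
  have iW1: "integrable lborel (\<lambda>u. indicator ?W u * (1::real))"
    by (intro int_cball continuous_intros)
  have I3: "(\<integral>u. indicator ?W u * (exp (-K) * (1 + K - g (\<theta>b + u))) \<partial>lborel)
      \<le> (\<integral>u. indicator ?W u * exp (- g (\<theta>b + u)) \<partial>lborel)"
  proof (rule integral_mono)
    show "integrable lborel (\<lambda>u. indicator ?W u * (exp (-K) * (1 + K - g (\<theta>b + u))))"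
      by (intro int_cball continuous_intros gc2)
    show "integrable lborel (\<lambda>u. indicator ?W u * exp (- g (\<theta>b + u)))"
      by (intro int_cball continuous_intros gc2)
    show "indicator ?W u * (exp (-K) * (1 + K - g (\<theta>b + u))) \<le> indicator ?W u * exp (- g (\<theta>b + u))" for u
    proof -
      have "1 + K - g (\<theta>b + u) \<le> exp (K - g (\<theta>b + u))"
        using exp_ge_add_one_self[of "K - g (\<theta>b + u)"] by linarith
      then have "exp (-K) * (1 + K - g (\<theta>b + u)) \<le> exp (-K) * exp (K - g (\<theta>b + u))"
        by (rule mult_left_mono) simp
      also have "\<dots> = exp (- g (\<theta>b + u))" by (simp add: exp_add[symmetric])
      finally show ?thesis by (intro mult_left_mono) auto
    qed
  qed
  have I4: "(\<integral>u. indicator ?W u * (exp (-K) * (1 + K - g (\<theta>b + u))) \<partial>lborel)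
      = exp (-K) * ((1 + K) * (\<integral>u. indicator ?W u * (1::real) \<partial>lborel) - (\<integral>u. indicator ?W u * g (\<theta>b + u) \<partial>lborel))"
  proof -
    have "(\<lambda>u. indicator ?W u * (exp (-K) * (1 + K - g (\<theta>b + u))))
        = (\<lambda>u. exp (-K) * ((1 + K) * (indicator ?W u * (1::real)) - indicator ?W u * g (\<theta>b + u)))"
      by (auto simp: algebra_simps)
    then show ?thesis using iW iW1 by simp
  qed
  have one: "(\<integral>u. indicator ?W u * (1::real) \<partial>lborel) = ?mW"
    using emeasure_lborel_cball_finite[of "0::'a" e] by simp
  have I5: "(\<integral>u. indicator ?W u * g (\<theta>b + u) \<partial>lborel) \<le> ?mW * K"
  proof -
    have "(\<integral>u. indicator ?W u * g (\<theta>b + u) \<partial>lborel)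
        = (\<integral>u. (\<Sum>r\<in>A. indicator ?W u * sq_loss X Y r (\<theta>b + u)) \<partial>lborel)"
      unfolding g_def by (simp add: sum_distrib_left)
    also have "\<dots> = (\<Sum>r\<in>A. (\<integral>u. indicator ?W u * sq_loss X Y r (\<theta>b + u) \<partial>lborel))"
    proof (rule Bochner_Integration.integral_sum)
      fix r assume "r \<in> A"
      have "continuous_on ?W (\<lambda>u. sq_loss X Y r (\<theta>b + u))"
        unfolding sq_loss_def by (intro continuous_intros) auto
      then show "integrable lborel (\<lambda>u. indicator ?W u * sq_loss X Y r (\<theta>b + u))"
        by (rule int_cball)
    qed
    also have "\<dots> \<le> (\<Sum>r\<in>A. ?mW * (sq_loss X Y r \<theta>b + e\<^sup>2 / 2))"
    proof (rule sum_mono)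
      fix r assume "r \<in> A"
      then show "(\<integral>u. indicator ?W u * sq_loss X Y r (\<theta>b + u) \<partial>lborel) \<le> ?mW * (sq_loss X Y r \<theta>b + e\<^sup>2 / 2)"
        using per_r_bound[of "X r" e \<theta>b "Y r"] nX e unfolding sq_loss_def by auto
    qed
    also have "\<dots> = ?mW * K"
      unfolding K_def by (simp add: sum_distrib_left sum.distrib algebra_simps)
    finally show ?thesis .
  qed
  have "exp (-K) * ?mW \<le> (\<integral>x. indicator ?S x * exp (- g x) \<partial>lborel)"
  proof -
    have "exp (-K) * ?mW \<le> exp (-K) * ((1 + K) * ?mW - (\<integral>u. indicator ?W u * g (\<theta>b + u) \<partial>lborel))"
      using I5 by (intro mult_left_mono) (auto simp: algebra_simps)
    moreover have "(\<integral>u. indicator ?W u * (exp (-K) * (1 + K - g (\<theta>b + u))) \<partial>lborel)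
      = exp (-K) * ((1 + K) * ?mW - (\<integral>u. indicator ?W u * g (\<theta>b + u) \<partial>lborel))"
      using I4 unfolding one .
    ultimately show ?thesis using I1 I2 I3 by linarith
  qed
  then have "exp (-K) * ?mW / ?mR \<le> (\<integral>\<theta>. exp (- g \<theta>) \<partial>unif_ball R)"
    unfolding Z using mRpos by (intro divide_right_mono) auto
  moreover have "exp (-K) * ?mW / ?mR = (e/R)^DIM('a) * exp (-K)"
    unfolding mR mW using u1 Rpos by (simp add: power_divide field_simps)
  ultimately show ?thesis unfolding K_def g_def by simp
qed


definition Zf :: "real \<Rightarrow> (nat \<Rightarrow> 'a::euclidean_space) \<Rightarrow> (nat \<Rightarrow> real) \<Rightarrow> nat set \<Rightarrow> real" where
  "Zf R X Y A = (\<integral>\<theta>. exp (- (\<Sum>r\<in>A. sq_loss X Y r \<theta>)) \<partial>unif_ball R)"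

definition cls :: "nat \<Rightarrow> nat \<Rightarrow> nat \<Rightarrow> nat set" where
  "cls d j t = {r. 1 \<le> r \<and> r \<le> t \<and> r mod d = j}"

lemma meas_U:
  assumes "f \<in> borel_measurable borel"
  shows "f \<in> borel_measurable (unif_ball R)"
proof -
  have "sets (unif_ball R) = sets (borel :: 'a::euclidean_space measure)"
    by (simp add: unif_ball_def)
  then show ?thesis using assms measurable_cong_sets[of "unif_ball R" borel borel borel] by simp
qed

lemma Zf_pos:
  fixes X :: "nat \<Rightarrow> 'a::euclidean_space"
  assumes "finite A" "\<forall>r\<in>A. norm (X r) \<le> 1" "R > 0"
  shows "Zf R X Y A > 0"
proof -
  have "0 < (R/R)^DIM('a) * exp (- ((\<Sum>r\<in>A. sq_loss X Y r 0) + card A * R\<^sup>2/2))"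
    using assms by simp
  also have "\<dots> \<le> Zf R X Y A"
    unfolding Zf_def by (rule lemK) (use assms in auto)
  finally show ?thesis .
qed

lemma Zf_empty: "R > 0 \<Longrightarrow> Zf R (X :: nat \<Rightarrow> 'a::euclidean_space) Y {} = 1"
  unfolding Zf_def
  apply (subst unif_int)
    apply simp
   apply simp
  using emeasure_lborel_cball_finite[of "0::'a" R] cball_vol[of R "0::'a"] unit_vol_pos[where 'a='a]
  by simp

lemma mix_eq:
  fixes X :: "nat \<Rightarrow> 'a::euclidean_space"
  assumes "B > 0" "finite (past_rounds d s)" "\<forall>r\<in>insert s (past_rounds d s). norm (X r) \<le> 1"
  shows "mix_loss (joint_forecast d B X Y s) (sq_loss X Y s)
       = ln (Zf (B+1) X Y (past_rounds d s)) - ln (Zf (B+1) X Y (insert s (past_rounds d s)))"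
proof -
  let ?P = "past_rounds d s"
  let ?U = "unif_ball (B + 1) :: 'a measure"
  define F where "F = (\<lambda>\<theta>. \<Sum>r\<in>?P. sq_loss X Y r \<theta>)"
  define Z where "Z = Zf (B+1) X Y ?P"
  have Zp: "Z > 0" unfolding Z_def by (rule Zf_pos) (use assms in auto)
  have Z1p: "Zf (B+1) X Y (insert s ?P) > 0" by (rule Zf_pos) (use assms in auto)
  have sP: "s \<notin> ?P" by (simp add: past_rounds_def)
  have cF: "continuous_on UNIV F" unfolding F_def by (rule L_cont)
  have cl: "continuous_on UNIV (sq_loss X Y s)" by (rule sq_loss_cont)
  have mF: "F \<in> borel_measurable borel" unfolding F_def
    by (intro borel_measurable_continuous_onI L_cont)
  have ml: "sq_loss X Y s \<in> borel_measurable borel"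
    by (intro borel_measurable_continuous_onI sq_loss_cont)
  have Zeq: "(\<integral>\<eta>. exp (- F \<eta>) \<partial>?U) = Z" unfolding Z_def Zf_def F_def ..
  have "(\<integral>\<theta>. exp (- sq_loss X Y s \<theta>) \<partial>joint_forecast d B X Y s)
      = (\<integral>\<theta>. (exp (- F \<theta>) / Z) *\<^sub>R exp (- sq_loss X Y s \<theta>) \<partial>?U)"
    unfolding joint_forecast_def ewa_post_def F_def[symmetric] Zeq
    by (rule integral_density) (use Zp cF cl in \<open>auto intro!: meas_U borel_measurable_continuous_onI continuous_intros borel_measurable_divide borel_measurable_exp borel_measurable_uminus\<close>)
  also have "\<dots> = (\<integral>\<theta>. exp (- (\<Sum>r\<in>insert s ?P. sq_loss X Y r \<theta>)) \<partial>?U) / Z"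
    using assms(2) sP by (simp add: F_def exp_add[symmetric] algebra_simps)
  finally have "(\<integral>\<theta>. exp (- sq_loss X Y s \<theta>) \<partial>joint_forecast d B X Y s) = Zf (B+1) X Y (insert s ?P) / Z"
    by (simp add: Zf_def)
  then show ?thesis unfolding mix_loss_def using Zp Z1p by (simp add: ln_div Z_def)
qed


lemma cls_finite: "finite (cls d j t)"
  unfolding cls_def by (rule finite_subset[of _ "{..t}"]) auto

lemma past_cls: "s \<ge> 1 \<Longrightarrow> past_rounds d s = cls d (s mod d) (s - 1)"
  unfolding past_rounds_def cls_def by auto

lemma cls_Suc: "cls d j (Suc t) = (if j = Suc t mod d then insert (Suc t) (cls d j t) else cls d j t)"
  unfolding cls_def by (auto simp: le_Suc_eq)

lemma telescope:
  fixes X :: "nat \<Rightarrow> 'a::euclidean_space"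
  assumes "B > 0" "d \<ge> 1" "\<And>s. s \<ge> 1 \<Longrightarrow> norm (X s) \<le> 1"
  shows "(\<Sum>s=1..t. mix_loss (joint_forecast d B X Y s) (sq_loss X Y s))
       = - (\<Sum>j<d. ln (Zf (B+1) X Y (cls d j t)))"
proof (induction t)
  case 0
  have "cls d j 0 = {}" for j unfolding cls_def by auto
  moreover have "Zf (B+1) X Y {} = 1" using assms by (intro Zf_empty) simp
  ultimately show ?case by simp
next
  case (Suc t)
  let ?k = "Suc t mod d"
  let ?f = "\<lambda>j. ln (Zf (B+1) X Y (cls d j t))"
  let ?g = "\<lambda>j. ln (Zf (B+1) X Y (cls d j (Suc t)))"
  have k: "?k \<in> {..<d}" using assms by simp
  have P: "past_rounds d (Suc t) = cls d ?k t" using past_cls[of "Suc t" d] by simp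
  have m: "mix_loss (joint_forecast d B X Y (Suc t)) (sq_loss X Y (Suc t)) = ?f ?k - ?g ?k"
    unfolding mix_eq[OF assms(1) _ , where s="Suc t"] P cls_Suc
    apply (subst mix_eq[OF assms(1)])
    using cls_finite assms(3) unfolding P by (auto simp: cls_def)
  have "(\<Sum>j<d. ?g j - ?f j) = (\<Sum>j<d. if j = ?k then ?g ?k - ?f ?k else 0)"
    by (intro sum.cong refl) (simp add: cls_Suc)
  also have "\<dots> = ?g ?k - ?f ?k" using k by simp
  finally have "(\<Sum>j<d. ?g j) - (\<Sum>j<d. ?f j) = ?g ?k - ?f ?k" by (simp add: sum_subtractf)
  then show ?case using Suc.IH m by simp
qed


theorem lemma2:
  fixes B :: real and d t :: nat
    and X :: "nat \<Rightarrow> 'a::euclidean_space" and Y :: "nat \<Rightarrow> real"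
    and \<theta>bar :: 'a
  assumes "B > 0" and "d \<ge> 1"
    and "\<And>s. s \<ge> 1 \<Longrightarrow> norm (X s) \<le> 1"
    and "\<theta>bar \<in> cball 0 B"
    and "t \<ge> 1"
  shows "(\<Sum>s=1..t. mix_loss (joint_forecast d B X Y s) (sq_loss X Y s))
           - (\<Sum>s=1..t. sq_loss X Y s \<theta>bar)
         \<le> real (d * DIM('a)) / 2 *
            ln ((B + 1)\<^sup>2 * exp 1 * real (max (d * DIM('a)) (t + d)) / real (d * DIM('a)))"
proof -
  define R where "R = B + 1"
  define p where "p = DIM('a)"
  define N where "N = real (d * p)"
  define M where "M = real (max (d * p) (t + d))"
  define e where "e = sqrt (N / M)"
  define h where "h = (\<lambda>r. sq_loss X Y r \<theta>bar)"
  have Rpos: "R > 0" using assms unfolding R_def by simp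
  have ppos: "p > 0" unfolding p_def by simp
  have Npos: "N > 0" using assms ppos unfolding N_def by simp
  have NM: "N \<le> M" unfolding N_def M_def by (simp only: of_nat_le_iff)
  have tM: "real t \<le> M" unfolding M_def by simp
  have Mpos: "M > 0" using Npos NM by simp
  have epos: "e > 0" unfolding e_def using Npos Mpos by simp
  have e2: "e\<^sup>2 = N / M" unfolding e_def using Npos Mpos by simp
  have ele: "e \<le> 1" unfolding e_def using NM Mpos by (simp add: real_sqrt_le_1_iff)
  have lne: "ln e = (ln N - ln M) / 2"
    unfolding e_def using Npos Mpos by (simp add: ln_sqrt ln_div)
  have nb: "norm \<theta>bar + e \<le> R" using assms(4) ele unfolding R_def by simp
  have per: "- ln (Zf R X Y (cls d j t)) \<le> real p * (ln R - ln e) + (\<Sum>r\<in>cls d j t. h r) + real (card (cls d j t)) * e\<^sup>2 / 2"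
    for j
  proof -
    let ?A = "cls d j t"
    let ?K = "(\<Sum>r\<in>?A. h r) + real (card ?A) * e\<^sup>2 / 2"
    have nX: "\<forall>r\<in>?A. norm (X r) \<le> 1" using assms(3) unfolding cls_def by auto
    have c: "(e/R)^p * exp (- ?K) \<le> Zf R X Y ?A"
      unfolding Zf_def h_def p_def by (rule lemK[OF cls_finite nX epos nb])
    have cpos: "(e/R)^p * exp (- ?K) > 0" using epos Rpos by simp
    have "ln ((e/R)^p * exp (- ?K)) \<le> ln (Zf R X Y ?A)"
      using c cpos by simp
    moreover have "ln ((e/R)^p * exp (- ?K)) = real p * (ln e - ln R) - ?K"
      using epos Rpos by (simp add: ln_mult ln_realpow ln_div)
    ultimately show ?thesis by (simp add: algebra_simps)
  qed
  have grp: "(\<Sum>j<d. \<Sum>r\<in>cls d j t. g r) = (\<Sum>r=1..t. g r)" for g :: "nat \<Rightarrow> real"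
  proof -
    have "(\<Sum>j<d. \<Sum>r\<in>cls d j t. g r) = (\<Sum>j<d. \<Sum>r\<in>{x. x \<in> {1..t} \<and> x mod d = j}. g r)"
      unfolding cls_def by (intro sum.cong refl) auto
    also have "\<dots> = (\<Sum>r=1..t. g r)"
      by (rule sum.group) (use assms(2) in auto)
    finally show ?thesis .
  qed
  have cardsum: "(\<Sum>j<d. real (card (cls d j t))) = real t"
    using grp[of "\<lambda>_. 1"] by simp
  have tel: "(\<Sum>s=1..t. mix_loss (joint_forecast d B X Y s) (sq_loss X Y s))
       = - (\<Sum>j<d. ln (Zf R X Y (cls d j t)))"
    unfolding R_def by (rule telescope[OF assms(1-3)])
  have "- (\<Sum>j<d. ln (Zf R X Y (cls d j t)))
      \<le> (\<Sum>j<d. real p * (ln R - ln e) + (\<Sum>r\<in>cls d j t. h r) + real (card (cls d j t)) * e\<^sup>2 / 2)"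
    unfolding sum_negf[symmetric] by (intro sum_mono per)
  also have "\<dots> = N * (ln R - ln e) + (\<Sum>r=1..t. h r) + real t * e\<^sup>2 / 2"
    unfolding sum.distrib grp sum_divide_distrib[symmetric] sum_distrib_right[symmetric] cardsum
    by (simp add: N_def)
  finally have main: "(\<Sum>s=1..t. mix_loss (joint_forecast d B X Y s) (sq_loss X Y s)) - (\<Sum>r=1..t. h r)
      \<le> N * (ln R - ln e) + real t * e\<^sup>2 / 2"
    unfolding tel by simp
  have te: "real t * e\<^sup>2 / 2 \<le> N / 2"
  proof -
    have "real t * (N / M) \<le> M * (N / M)" using tM Npos Mpos by (intro mult_right_mono) auto
    then show ?thesis unfolding e2 using Mpos by simp
  qed
  have rhs: "ln (R\<^sup>2 * exp 1 * M / N) = 2 * ln R + 1 + ln M - ln N"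
    using Rpos Mpos Npos by (simp add: ln_div ln_mult ln_realpow)
  have "N * (ln R - ln e) + real t * e\<^sup>2 / 2 \<le> N / 2 * ln (R\<^sup>2 * exp 1 * M / N)"
  proof -
    have a: "N * (ln R - (ln N - ln M) / 2) = N * ln R - N * ln N / 2 + N * ln M / 2"
      by (simp add: field_simps)
    have b: "N / 2 * (2 * ln R + 1 + ln M - ln N) = N * ln R + N / 2 + N * ln M / 2 - N * ln N / 2"
      by (simp add: field_simps)
    show ?thesis unfolding rhs lne a b using te by linarith
  qed
  with main show ?thesis unfolding h_def R_def N_def M_def p_def by simp
qed

end
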